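(* Let $G=(V,E)$ be a connected undirected graph with $V=\{1,\dots,n\}$, $E=\{1,\dots,m\}$, labeled nodes $1,\dots,n_l$ (with $1\le n_l<n$), and edge dissimilarities $d_e>0$. Set $\lambda=0$. Then for every unlabeled node $p\in\{n_l+1,\dots,n\}$ and every vector of labels $\vec f_l=(f(1),\dots,f(n_l))^{\top}$, the flow-based prediction $f(p)=\vec w(p)^{\top}\vec f_l$ coincides with the Harmonic Functions prediction at $p$, i.e. with the $p$-th entry of $\vec f_u=-L_{uu}^{-1}L_{ul}\vec f_l$, where $L=AD^{-1}A^{\top}$, $D=\mathrm{diag}(d_1,\dots,d_m)$, and $L_{uu}$, $L_{ul}$ are the blocks of $L$ with rows indexed by unlabeled nodes and columns indexed by unlabeled, resp. labeled, nodes. (Equivalently, $\vec f_u$ is the minimizer of $\sum_{(i,j)\in E}-L_{ij}(f_i-f_j)^2$ over $\vec f\in\mathbb R^n$ subject to $f_i=f(i)$ for $i\le n_l$.)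
   Context: Orient each edge of $G$ arbitrarily and let $A$ be the $n\times m$ signed incidence matrix: for edge $e$ oriented from $i$ to $j$, $A_{ie}=+1$, $A_{je}=-1$, other entries of column $e$ zero. Let $A_l$ be the submatrix of rows $1,\dots,n_l$ and $A_u$ the submatrix of the remaining rows. For an unlabeled node $p$, let $\vec b_p\in\mathbb R^{n-n_l}$ be the vector (indexed by unlabeled nodes) that is $0$ everywhere except $-1$ at the entry of $p$. For $\lambda\ge0$, the flow $\vec x\in\mathbb R^m$ is the unique minimizer of $\frac12\sum_{e=1}^m d_e(x_e^2+\lambda|x_e|)$ subject to $A_u\vec x=\vec b_p$, and the prediction weights are $\vec w(p)=A_l\vec x\in\mathbb R^{n_l}$; the flow-based prediction is $f(p)=\sum_{i=1}^{n_l}w_i(p)f(i)$. *)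

theory Defs
  imports Complex_Main "Jordan_Normal_Form.Gauss_Jordan_Elimination"
begin

text \<open>Graph on nodes 1..n with edges 1..m; edge e is oriented from src e to dst e.
  Nodes 1..nl are labeled, nodes nl+1..n unlabeled.\<close>

definition adjacent :: "nat \<Rightarrow> (nat \<Rightarrow> nat) \<Rightarrow> (nat \<Rightarrow> nat) \<Rightarrow> nat \<Rightarrow> nat \<Rightarrow> bool" where
  "adjacent m src dst i j \<longleftrightarrow> (\<exists>e\<in>{1..m}. {src e, dst e} = {i, j})"

definition graph_connected :: "nat \<Rightarrow> nat \<Rightarrow> (nat \<Rightarrow> nat) \<Rightarrow> (nat \<Rightarrow> nat) \<Rightarrow> bool" where
  "graph_connected n m src dst \<longleftrightarrow>
     (\<forall>i\<in>{1..n}. \<forall>j\<in>{1..n}. (i, j) \<in> {(a, b). adjacent m src dst a b}\<^sup>*)"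

definition incidence :: "(nat \<Rightarrow> nat) \<Rightarrow> (nat \<Rightarrow> nat) \<Rightarrow> nat \<Rightarrow> nat \<Rightarrow> real" where
  "incidence src dst i e = (if i = src e then 1 else if i = dst e then -1 else 0)"

definition flow_objective :: "nat \<Rightarrow> (nat \<Rightarrow> real) \<Rightarrow> real \<Rightarrow> (nat \<Rightarrow> real) \<Rightarrow> real" where
  "flow_objective m d lam x = 1/2 * (\<Sum>e=1..m. d e * ((x e)\<^sup>2 + lam * \<bar>x e\<bar>))"

definition feasible_flow :: "nat \<Rightarrow> nat \<Rightarrow> nat \<Rightarrow> (nat \<Rightarrow> nat) \<Rightarrow> (nat \<Rightarrow> nat) \<Rightarrow> nat \<Rightarrow> (nat \<Rightarrow> real) \<Rightarrow> bool" where
  "feasible_flow n nl m src dst p x \<longleftrightarrow>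
     (\<forall>i\<in>{nl+1..n}. (\<Sum>e=1..m. incidence src dst i e * x e) = (if i = p then -1 else 0))
     \<and> (\<forall>e. e \<notin> {1..m} \<longrightarrow> x e = 0)"

definition flow :: "nat \<Rightarrow> nat \<Rightarrow> nat \<Rightarrow> (nat \<Rightarrow> nat) \<Rightarrow> (nat \<Rightarrow> nat) \<Rightarrow> (nat \<Rightarrow> real) \<Rightarrow> real \<Rightarrow> nat \<Rightarrow> (nat \<Rightarrow> real)" where
  "flow n nl m src dst d lam p = (THE x. feasible_flow n nl m src dst p x \<and>
      (\<forall>y. feasible_flow n nl m src dst p y \<longrightarrow> flow_objective m d lam x \<le> flow_objective m d lam y))"

definition pred_weight :: "nat \<Rightarrow> nat \<Rightarrow> nat \<Rightarrow> (nat \<Rightarrow> nat) \<Rightarrow> (nat \<Rightarrow> nat) \<Rightarrow> (nat \<Rightarrow> real) \<Rightarrow> real \<Rightarrow> nat \<Rightarrow> nat \<Rightarrow> real" where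
  "pred_weight n nl m src dst d lam p i = (\<Sum>e=1..m. incidence src dst i e * flow n nl m src dst d lam p e)"

definition flow_prediction :: "nat \<Rightarrow> nat \<Rightarrow> nat \<Rightarrow> (nat \<Rightarrow> nat) \<Rightarrow> (nat \<Rightarrow> nat) \<Rightarrow> (nat \<Rightarrow> real) \<Rightarrow> real \<Rightarrow> (nat \<Rightarrow> real) \<Rightarrow> nat \<Rightarrow> real" where
  "flow_prediction n nl m src dst d lam f p = (\<Sum>i=1..nl. pred_weight n nl m src dst d lam p i * f i)"

text \<open>Matrices (0-based in JNF: row index k stands for node k+1, column index k for edge k+1).\<close>
definition incidence_mat :: "nat \<Rightarrow> nat \<Rightarrow> (nat \<Rightarrow> nat) \<Rightarrow> (nat \<Rightarrow> nat) \<Rightarrow> real mat" where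
  "incidence_mat n m src dst = mat n m (\<lambda>(i, e). incidence src dst (i+1) (e+1))"

definition diss_mat :: "nat \<Rightarrow> (nat \<Rightarrow> real) \<Rightarrow> real mat" where
  "diss_mat m d = mat m m (\<lambda>(i, j). if i = j then d (i+1) else 0)"

definition laplacian_mat :: "nat \<Rightarrow> nat \<Rightarrow> (nat \<Rightarrow> nat) \<Rightarrow> (nat \<Rightarrow> nat) \<Rightarrow> (nat \<Rightarrow> real) \<Rightarrow> real mat" where
  "laplacian_mat n m src dst d =
     incidence_mat n m src dst * the (mat_inverse (diss_mat m d)) * transpose_mat (incidence_mat n m src dst)"

definition L_uu :: "nat \<Rightarrow> nat \<Rightarrow> nat \<Rightarrow> (nat \<Rightarrow> nat) \<Rightarrow> (nat \<Rightarrow> nat) \<Rightarrow> (nat \<Rightarrow> real) \<Rightarrow> real mat" where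
  "L_uu n nl m src dst d = mat (n - nl) (n - nl) (\<lambda>(i, j). laplacian_mat n m src dst d $$ (nl + i, nl + j))"

definition L_ul :: "nat \<Rightarrow> nat \<Rightarrow> nat \<Rightarrow> (nat \<Rightarrow> nat) \<Rightarrow> (nat \<Rightarrow> nat) \<Rightarrow> (nat \<Rightarrow> real) \<Rightarrow> real mat" where
  "L_ul n nl m src dst d = mat (n - nl) nl (\<lambda>(i, j). laplacian_mat n m src dst d $$ (nl + i, j))"

text \<open>f_u = - L_uu^{-1} L_ul f_l; its entry for node p (p > nl) has 0-based index p - nl - 1.\<close>
definition harmonic_prediction :: "nat \<Rightarrow> nat \<Rightarrow> nat \<Rightarrow> (nat \<Rightarrow> nat) \<Rightarrow> (nat \<Rightarrow> nat) \<Rightarrow> (nat \<Rightarrow> real) \<Rightarrow> (nat \<Rightarrow> real) \<Rightarrow> nat \<Rightarrow> real" where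
  "harmonic_prediction n nl m src dst d f p =
     ((- (the (mat_inverse (L_uu n nl m src dst d)) * L_ul n nl m src dst d)) *\<^sub>v vec nl (\<lambda>i. f (i+1))) $ (p - nl - 1)"

end

theory Submission
  imports Defs "Jordan_Normal_Form.Determinant"
begin

lemma inv_exists:
  fixes A :: "real mat"
  assumes A: "A \<in> carrier_mat k k" and ker: "\<And>v. v \<in> carrier_vec k \<Longrightarrow> A *\<^sub>v v = 0\<^sub>v k \<Longrightarrow> v = 0\<^sub>v k"
  shows "\<exists>B. mat_inverse A = Some B \<and> A * B = 1\<^sub>m k \<and> B * A = 1\<^sub>m k \<and> B \<in> carrier_mat k k"
proof (cases "mat_inverse A")
  case None
  have "det A \<noteq> 0" using det_0_iff_vec_prod_zero_field[OF A] ker by blast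
  then have "A \<in> Units (ring_mat TYPE(real) k ())" using det_non_zero_imp_unit[OF A, of "()"] by blast
  with mat_inverse(1)[OF A None, of "()"] show ?thesis by blast
next
  case (Some B) then show ?thesis using mat_inverse(2)[OF A Some] by blast
qed

lemma sum_shift1: "(\<Sum>e=1..m. g e) = (\<Sum>e<m. g (Suc e)::real)"
  by (induction m) auto

lemma sum_shift2: "(\<Sum>j\<in>{(nl::nat)+1..n}. g j) = (\<Sum>j<n-nl. g (nl+1+j)::real)"
proof -
  have "{nl+1..n} = (\<lambda>j. nl+1+j) ` {..<n-nl}"
    apply (auto simp: image_iff) apply (rule_tac x="x - nl - 1" in bexI) by auto
  then show ?thesis by (simp add: sum.reindex inj_on_def)
qed

definition Einv :: "nat \<Rightarrow> (nat \<Rightarrow> real) \<Rightarrow> real mat" where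
  "Einv m d = mat m m (\<lambda>(i,j). if i=j then 1/d(i+1) else 0)"

lemma dinv:
  assumes dpos: "\<forall>e\<in>{1..m}. d e > 0"
  shows "the (mat_inverse (diss_mat m d)) = Einv m d"
proof -
  have Dc: "diss_mat m d \<in> carrier_mat m m" by (simp add: diss_mat_def)
  have ker: "v = 0\<^sub>v m" if v: "v \<in> carrier_vec m" and z: "diss_mat m d *\<^sub>v v = 0\<^sub>v m" for v
  proof (rule eq_vecI)
    fix i assume i: "i < dim_vec (0\<^sub>v m :: real vec)"
    then have im: "i < m" by simp
    have "(diss_mat m d *\<^sub>v v) $ i = (\<Sum>j<m. (if i = j then d (i+1) else 0) * v $ j)"
      using im v by (simp add: diss_mat_def scalar_prod_def lessThan_atLeast0)
    also have "\<dots> = d (i+1) * v $ i" using im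
      by (subst sum.cong[OF refl, of _ _ "\<lambda>j. if i = j then d (i+1) * v$j else 0"]) auto
    finally have "d (i+1) * v $ i = 0" using z im by simp
    moreover have "d (i+1) > 0" using dpos im by auto
    ultimately show "v $ i = 0\<^sub>v m $ i" using im by simp
  next
    show "dim_vec v = dim_vec (0\<^sub>v m :: real vec)" using v by simp
  qed
  obtain B where B: "mat_inverse (diss_mat m d) = Some B" "diss_mat m d * B = 1\<^sub>m m" "B \<in> carrier_mat m m"
    using inv_exists[OF Dc ker] by blast
  have Ec: "Einv m d \<in> carrier_mat m m" by (simp add: Einv_def)
  have ED: "Einv m d * diss_mat m d = 1\<^sub>m m"
  proof (rule eq_matI)
    fix i j assume "i < dim_row (1\<^sub>m m :: real mat)" "j < dim_col (1\<^sub>m m :: real mat)"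
    then have ij: "i < m" "j < m" by auto
    have "(Einv m d * diss_mat m d) $$ (i,j) = (\<Sum>k<m. (if i = k then 1/d(i+1) else 0) * (if k = j then d (k+1) else 0))"
      using ij by (simp add: Einv_def diss_mat_def scalar_prod_def lessThan_atLeast0)
    also have "\<dots> = (\<Sum>k<m. if k = i then (if i = j then 1 else 0) else 0)"
    proof (rule sum.cong[OF refl])
      fix k assume "k \<in> {..<m}"
      then have "d (k+1) > 0" using dpos by auto
      then show "(if i = k then 1/d(i+1) else 0) * (if k = j then d (k+1) else 0) = (if k = i then (if i = j then 1 else 0) else 0)"
        by auto
    qed
    also have "\<dots> = (if i = j then 1 else 0)" using ij by simp
    finally show "(Einv m d * diss_mat m d) $$ (i,j) = 1\<^sub>m m $$ (i,j)" using ij by simp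
  qed (auto simp: Einv_def diss_mat_def)
  have "B = (Einv m d * diss_mat m d) * B" using ED B(3) by simp
  also have "\<dots> = Einv m d * (diss_mat m d * B)" using Ec Dc B(3) by (simp add: assoc_mult_mat)
  also have "\<dots> = Einv m d" using B(2) Ec by simp
  finally show ?thesis using B(1) by simp
qed

lemma lap_entry:
  assumes dpos: "\<forall>e\<in>{1..m}. d e > 0" and ij: "i < n" "j < n"
  shows "laplacian_mat n m src dst d $$ (i,j) = (\<Sum>e=1..m. incidence src dst (i+1) e * incidence src dst (j+1) e / d e)"
proof -
  let ?A = "incidence_mat n m src dst"
  have AE: "?A * Einv m d = mat n m (\<lambda>(i,e). incidence src dst (i+1) (e+1) / d (e+1))"
  proof (rule eq_matI)
    fix i e assume "i < dim_row (mat n m (\<lambda>(i,e). incidence src dst (i+1) (e+1) / d (e+1)))"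
      "e < dim_col (mat n m (\<lambda>(i,e). incidence src dst (i+1) (e+1) / d (e+1)))"
    then have ie: "i < n" "e < m" by auto
    have "(?A * Einv m d) $$ (i,e) = (\<Sum>k<m. incidence src dst (i+1) (k+1) * (if k = e then 1/d(k+1) else 0))"
      using ie by (simp add: Einv_def incidence_mat_def scalar_prod_def lessThan_atLeast0)
    also have "\<dots> = incidence src dst (i+1) (e+1) / d (e+1)" using ie by (simp add: if_distrib sum.delta' cong: if_cong)
    finally show "(?A * Einv m d) $$ (i,e) = mat n m (\<lambda>(i,e). incidence src dst (i+1) (e+1) / d (e+1)) $$ (i,e)"
      using ie by simp
  qed (auto simp: Einv_def incidence_mat_def)
  have "laplacian_mat n m src dst d $$ (i,j) = (\<Sum>e<m. incidence src dst (i+1) (e+1) / d (e+1) * incidence src dst (j+1) (e+1))"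
    unfolding laplacian_mat_def dinv[OF dpos] AE using ij
    by (simp add: incidence_mat_def scalar_prod_def lessThan_atLeast0)
  also have "\<dots> = (\<Sum>e=1..m. incidence src dst (i+1) e * incidence src dst (j+1) e / d e)"
    by (subst sum_shift1) simp
  finally show ?thesis .
qed

lemma inc_sum:
  assumes "src e \<in> {1..n}" "dst e \<in> {1..n}" "src e \<noteq> dst e"
  shows "(\<Sum>i\<in>{1..n}. incidence src dst i e * W i) = W (src e) - W (dst e)"
proof -
  have "(\<Sum>i\<in>{1..n}. incidence src dst i e * W i) = (\<Sum>i\<in>{1..n}. (if i = src e then W i else 0) - (if i = dst e then W i else 0))"
    by (rule sum.cong) (use assms in \<open>auto simp: incidence_def\<close>)
  also have "\<dots> = W (src e) - W (dst e)" using assms by (simp add: sum_subtractf)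
  finally show ?thesis .
qed

lemma conn_const:
  assumes "graph_connected n m src dst" "\<forall>e\<in>{1..m}. W (src e) = W (dst e)"
    "i \<in> {1..n}" "j \<in> {1..n}"
  shows "W i = (W j :: real)"
proof -
  have "(i, j) \<in> {(a, b). adjacent m src dst a b}\<^sup>*" using assms unfolding graph_connected_def by blast
  then show ?thesis
  proof (induction rule: rtrancl_induct)
    case base then show ?case by simp
  next
    case (step b c)
    then obtain e where "e \<in> {1..m}" "{src e, dst e} = {b, c}" by (auto simp: adjacent_def)
    then have "W b = W c" using assms(2) by (auto simp: doubleton_eq_iff)
    then show ?case using step by simp
  qed
qed

locale fsetup =
  fixes n m nl :: nat and src dst :: "nat \<Rightarrow> nat" and d :: "nat \<Rightarrow> real" and p :: nat
  assumes nl1: "1 \<le> nl" and nln: "nl < n"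
    and edges: "\<forall>e\<in>{1..m}. src e \<in> {1..n} \<and> dst e \<in> {1..n} \<and> src e \<noteq> dst e"
    and conn: "graph_connected n m src dst"
    and dpos: "\<forall>e\<in>{1..m}. d e > 0"
    and pin: "p \<in> {nl+1..n}"
begin

abbreviation "inc \<equiv> incidence src dst"
definition "K i j = (\<Sum>e=1..m. inc i e * inc j e / d e)"
abbreviation "U \<equiv> n - nl"
abbreviation "M \<equiv> L_uu n nl m src dst d"

lemma K_sym: "K i j = K j i" unfolding K_def by (simp add: mult.commute)

lemma M_carrier: "M \<in> carrier_mat U U" by (simp add: L_uu_def)

lemma M_entry: "i < U \<Longrightarrow> j < U \<Longrightarrow> M $$ (i,j) = K (nl+i+1) (nl+j+1)"
  unfolding L_uu_def K_def using lap_entry[OF dpos, of "nl+i" n "nl+j"] by simp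

lemma Lul_entry: "j < U \<Longrightarrow> i < nl \<Longrightarrow> L_ul n nl m src dst d $$ (j,i) = K (nl+j+1) (i+1)"
  unfolding L_ul_def K_def using lap_entry[OF dpos, of "nl+j" n i] nln by simp

lemma quad:
  fixes v :: "real vec"
  assumes v: "v \<in> carrier_vec U"
  shows "v \<bullet> (M *\<^sub>v v) = (\<Sum>e=1..m. (\<Sum>i<U. inc (nl+i+1) e * v$i) * (\<Sum>j<U. inc (nl+j+1) e * v$j) / d e)"
proof -
  have "v \<bullet> (M *\<^sub>v v) = (\<Sum>i<U. v$i * (\<Sum>j<U. K (nl+i+1) (nl+j+1) * v$j))"
    using v M_carrier by (simp add: scalar_prod_def lessThan_atLeast0 M_entry)
  also have "\<dots> = (\<Sum>i<U. \<Sum>j<U. \<Sum>e=1..m. inc (nl+i+1) e * v$i * (inc (nl+j+1) e * v$j) / d e)"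
    unfolding K_def by (simp add: sum_distrib_left sum_distrib_right mult_ac)
  also have "\<dots> = (\<Sum>i<U. \<Sum>e=1..m. \<Sum>j<U. inc (nl+i+1) e * v$i * (inc (nl+j+1) e * v$j) / d e)"
    by (rule sum.cong[OF refl], rule sum.swap)
  also have "\<dots> = (\<Sum>e=1..m. \<Sum>i<U. \<Sum>j<U. inc (nl+i+1) e * v$i * (inc (nl+j+1) e * v$j) / d e)"
    by (rule sum.swap)
  also have "\<dots> = (\<Sum>e=1..m. (\<Sum>i<U. inc (nl+i+1) e * v$i) * (\<Sum>j<U. inc (nl+j+1) e * v$j) / d e)"
    by (simp add: sum_product sum_divide_distrib)
  finally show ?thesis .
qed

lemma M_ker:
  fixes v :: "real vec"
  assumes v: "v \<in> carrier_vec U" and z: "M *\<^sub>v v = 0\<^sub>v U"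
  shows "v = 0\<^sub>v U"
proof -
  define S where "S e = (\<Sum>i<U. inc (nl+i+1) e * v$i)" for e
  have "(\<Sum>e=1..m. S e * S e / d e) = 0"
    using quad[OF v] z v unfolding S_def by simp
  moreover have "\<forall>e\<in>{1..m}. S e * S e / d e \<ge> 0" using dpos by auto
  ultimately have S0: "\<forall>e\<in>{1..m}. S e * S e / d e = 0"
    using sum_nonneg_eq_0_iff[of "{1..m}" "\<lambda>e. S e * S e / d e"] by auto
  define V where "V i = (if nl < i \<and> i \<le> n then v $ (i - nl - 1) else 0)" for i
  have SV: "S e = V (src e) - V (dst e)" if e: "e \<in> {1..m}" for e
  proof -
    have "S e = (\<Sum>i\<in>{nl+1..n}. inc i e * V i)"
      unfolding S_def sum_shift2 by (rule sum.cong) (auto simp: V_def)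
    also have "\<dots> = (\<Sum>i\<in>{1..n}. inc i e * V i)"
    proof -
      have "{1..n} = {1..nl} \<union> {nl+1..n}" using nl1 nln by auto
      then have "(\<Sum>i\<in>{1..n}. inc i e * V i) = (\<Sum>i\<in>{1..nl}. inc i e * V i) + (\<Sum>i\<in>{nl+1..n}. inc i e * V i)"
        by (simp add: sum.union_disjoint)
      moreover have "(\<Sum>i\<in>{1..nl}. inc i e * V i) = 0" by (rule sum.neutral) (auto simp: V_def)
      ultimately show ?thesis by simp
    qed
    also have "\<dots> = V (src e) - V (dst e)" using edges e by (intro inc_sum) auto
    finally show ?thesis .
  qed
  have "\<forall>e\<in>{1..m}. V (src e) = V (dst e)"
  proof
    fix e assume e: "e \<in> {1..m}"
    then have "S e * S e / d e = 0" using S0 by auto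
    moreover have "d e > 0" using dpos e by auto
    ultimately have "S e = 0" by simp
    then show "V (src e) = V (dst e)" using SV[OF e] by simp
  qed
  then have Vc: "V i = V 1" if "i \<in> {1..n}" for i
    using conn_const[OF conn, of V i 1] that nl1 nln by auto
  have "V 1 = 0" using nl1 by (simp add: V_def)
  show ?thesis
  proof (rule eq_vecI)
    fix i assume "i < dim_vec (0\<^sub>v U :: real vec)"
    then have i: "i < U" by simp
    have "v $ i = V (nl+1+i)" using i by (simp add: V_def)
    also have "\<dots> = 0" using Vc[of "nl+1+i"] i \<open>V 1 = 0\<close> by auto
    finally show "v $ i = 0\<^sub>v U $ i" using i by simp
  qed (use v in simp)
qed

definition "Minv = the (mat_inverse M)"

lemma Minv: "mat_inverse M = Some Minv" "M * Minv = 1\<^sub>m U" "Minv * M = 1\<^sub>m U" "Minv \<in> carrier_mat U U"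
  using inv_exists[OF M_carrier M_ker] unfolding Minv_def by auto

lemma M_sym: "transpose_mat M = M"
proof (rule eq_matI)
  fix i j assume "i < dim_row M" "j < dim_col M"
  then have ij: "i < U" "j < U" using M_carrier by auto
  show "transpose_mat M $$ (i,j) = M $$ (i,j)" using ij M_carrier by (simp add: M_entry K_sym)
qed (use M_carrier in auto)

lemma Minv_sym: "i < U \<Longrightarrow> j < U \<Longrightarrow> Minv $$ (i,j) = Minv $$ (j,i)"
proof -
  assume ij: "i < U" "j < U"
  let ?T = "transpose_mat Minv"
  have Tc: "?T \<in> carrier_mat U U" using Minv(4) by simp
  have "?T * M = ?T * transpose_mat M" using M_sym by simp
  also have "\<dots> = transpose_mat (M * Minv)" using Minv(4) M_carrier by (simp add: transpose_mult)
  also have "\<dots> = 1\<^sub>m U" using Minv(2) by simp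
  finally have TM: "?T * M = 1\<^sub>m U" .
  have "?T = ?T * (M * Minv)" using Minv(2) Tc by simp
  also have "\<dots> = (?T * M) * Minv" using Tc M_carrier Minv(4) by (simp add: assoc_mult_mat)
  also have "\<dots> = Minv" using TM Minv(4) by simp
  finally have "?T = Minv" .
  then have "?T $$ (i,j) = Minv $$ (i,j)" by simp
  then show ?thesis using ij Minv(4) by simp
qed

definition "kk = p - nl - 1"
definition "mu i = (if nl < i \<and> i \<le> n then - Minv $$ (i - nl - 1, kk) else 0)"
definition "xf e = (if e \<in> {1..m} then (\<Sum>j\<in>{nl+1..n}. inc j e * mu j) / d e else 0)"

lemma kk: "kk < U" using pin unfolding kk_def by auto

lemma x_inc: "(\<Sum>e=1..m. inc i e * xf e) = (\<Sum>j\<in>{nl+1..n}. K i j * mu j)"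
proof -
  have "(\<Sum>e=1..m. inc i e * xf e) = (\<Sum>e=1..m. \<Sum>j\<in>{nl+1..n}. inc i e * inc j e / d e * mu j)"
    by (rule sum.cong[OF refl]) (simp add: xf_def sum_distrib_left sum_divide_distrib mult_ac)
  also have "\<dots> = (\<Sum>j\<in>{nl+1..n}. \<Sum>e=1..m. inc i e * inc j e / d e * mu j)" by (rule sum.swap)
  also have "\<dots> = (\<Sum>j\<in>{nl+1..n}. K i j * mu j)" unfolding K_def by (simp add: sum_distrib_right)
  finally show ?thesis .
qed

lemma KM:
  assumes i: "i \<in> {nl+1..n}"
  shows "(\<Sum>j\<in>{nl+1..n}. K i j * mu j) = (if i = p then -1 else 0)"
proof -
  define a where "a = i - nl - 1"
  have a: "a < U" "i = nl + a + 1" using i unfolding a_def by auto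
  have "(\<Sum>j\<in>{nl+1..n}. K i j * mu j) = (\<Sum>j<U. K i (nl+1+j) * mu (nl+1+j))" by (rule sum_shift2)
  also have "\<dots> = - (\<Sum>j<U. M $$ (a, j) * Minv $$ (j, kk))"
    by (simp add: sum_negf[symmetric] M_entry a mu_def) (rule sum.cong, auto simp: M_entry a)
  also have "(\<Sum>j<U. M $$ (a, j) * Minv $$ (j, kk)) = (M * Minv) $$ (a, kk)"
    using M_carrier Minv(4) a kk by (simp add: scalar_prod_def lessThan_atLeast0)
  also have "\<dots> = (if a = kk then 1 else 0)" using Minv(2) a kk by simp
  finally show ?thesis using a pin unfolding kk_def by auto
qed

lemma feas: "feasible_flow n nl m src dst p xf"
  unfolding feasible_flow_def using x_inc KM by (auto simp: xf_def)

lemma obj0: "flow_objective m d 0 y = 1/2 * (\<Sum>e=1..m. d e * (y e)^2)"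
  by (simp add: flow_objective_def)

lemma opt:
  assumes y: "feasible_flow n nl m src dst p y"
  shows "flow_objective m d 0 xf \<le> flow_objective m d 0 y"
    and "flow_objective m d 0 y \<le> flow_objective m d 0 xf \<Longrightarrow> y = xf"
proof -
  define z where "z e = y e - xf e" for e
  have zA: "(\<Sum>e=1..m. inc i e * z e) = 0" if i: "i \<in> {nl+1..n}" for i
  proof -
    have "(\<Sum>e=1..m. inc i e * z e) = (\<Sum>e=1..m. inc i e * y e) - (\<Sum>e=1..m. inc i e * xf e)"
      unfolding z_def by (simp add: right_diff_distrib sum_subtractf)
    then show ?thesis using y feas i unfolding feasible_flow_def by auto
  qed
  have cross: "(\<Sum>e=1..m. d e * xf e * z e) = 0"
  proof -
    have "(\<Sum>e=1..m. d e * xf e * z e) = (\<Sum>e=1..m. \<Sum>j\<in>{nl+1..n}. mu j * (inc j e * z e))"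
    proof (rule sum.cong[OF refl])
      fix e assume e: "e \<in> {1..m}"
      then have "d e > 0" using dpos by auto
      then show "d e * xf e * z e = (\<Sum>j\<in>{nl+1..n}. mu j * (inc j e * z e))"
      proof -
        have "d e * xf e = (\<Sum>j\<in>{nl+1..n}. inc j e * mu j)" using e \<open>d e > 0\<close> by (simp add: xf_def)
        then show ?thesis by (simp add: sum_distrib_right sum_distrib_left mult_ac)
      qed
    qed
    also have "\<dots> = (\<Sum>j\<in>{nl+1..n}. mu j * (\<Sum>e=1..m. inc j e * z e))"
      by (subst sum.swap) (simp add: sum_distrib_left)
    also have "\<dots> = 0" using zA by simp
    finally show ?thesis .
  qed
  have expand: "(\<Sum>e=1..m. d e * (y e)^2) = (\<Sum>e=1..m. d e * (xf e)^2) + 2 * (\<Sum>e=1..m. d e * xf e * z e) + (\<Sum>e=1..m. d e * (z e)^2)"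
  proof -
    have "(\<Sum>e=1..m. d e * (y e)^2) = (\<Sum>e=1..m. d e * (xf e)^2 + 2 * (d e * xf e * z e) + d e * (z e)^2)"
      by (rule sum.cong[OF refl]) (simp add: z_def power2_eq_square algebra_simps)
    then show ?thesis by (simp add: sum.distrib sum_distrib_left)
  qed
  have nn: "\<forall>e\<in>{1..m}. 0 \<le> d e * (z e)^2"
  proof
    fix e assume "e \<in> {1..m}" then have "d e > 0" using dpos by auto
    then show "0 \<le> d e * (z e)^2" by simp
  qed
  have zpos: "(\<Sum>e=1..m. d e * (z e)^2) \<ge> 0" using nn by (intro sum_nonneg) auto
  show "flow_objective m d 0 xf \<le> flow_objective m d 0 y"
    unfolding obj0 using expand cross zpos by simp
  assume le: "flow_objective m d 0 y \<le> flow_objective m d 0 xf"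
  then have "(\<Sum>e=1..m. d e * (z e)^2) = 0" unfolding obj0 using expand cross zpos by simp
  then have z0: "\<forall>e\<in>{1..m}. d e * (z e)^2 = 0"
    by (metis (no_types, lifting) finite_atLeastAtMost nn sum_nonneg_eq_0_iff)
  show "y = xf"
  proof
    fix e show "y e = xf e"
    proof (cases "e \<in> {1..m}")
      case True
      then have "d e > 0" using dpos by auto
      moreover have "d e * (z e)^2 = 0" using z0 True by blast
      ultimately have "z e = 0" by simp
      then show ?thesis by (simp add: z_def)
    next
      case False
      then have "y e = 0" using y unfolding feasible_flow_def by blast
      moreover have "xf e = 0" using False unfolding xf_def by auto
      ultimately show ?thesis by simp
    qed
  qed
qed

lemma flow_eq: "flow n nl m src dst d 0 p = xf"
  unfolding flow_def
  by (rule the_equality) (use feas opt in blast)+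

lemma main: "flow_prediction n nl m src dst d 0 f p = harmonic_prediction n nl m src dst d f p"
proof -
  let ?Lul = "L_ul n nl m src dst d"
  have Lc: "?Lul \<in> carrier_mat U nl" by (simp add: L_ul_def)
  have "flow_prediction n nl m src dst d 0 f p = (\<Sum>i=1..nl. (\<Sum>j\<in>{nl+1..n}. K i j * mu j) * f i)"
    unfolding flow_prediction_def pred_weight_def flow_eq x_inc ..
  also have "\<dots> = (\<Sum>i<nl. (\<Sum>j<U. K (i+1) (nl+1+j) * mu (nl+1+j)) * f (i+1))"
    unfolding sum_shift1 sum_shift2 by simp
  also have "\<dots> = (\<Sum>i<nl. (- (\<Sum>j<U. Minv $$ (kk,j) * K (nl+j+1) (i+1))) * f (i+1))"
  proof (rule sum.cong[OF refl])
    fix i assume "i \<in> {..<nl}"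
    have "(\<Sum>j<U. K (i+1) (nl+1+j) * mu (nl+1+j)) = (\<Sum>j<U. - (Minv $$ (kk,j) * K (nl+j+1) (i+1)))"
    proof (rule sum.cong[OF refl])
      fix j assume j: "j \<in> {..<U}"
      then show "K (i+1) (nl+1+j) * mu (nl+1+j) = - (Minv $$ (kk,j) * K (nl+j+1) (i+1))"
        using Minv_sym[of j kk] kk K_sym[of "i+1" "nl+j+1"] by (auto simp: mu_def)
    qed
    then show "(\<Sum>j<U. K (i+1) (nl+1+j) * mu (nl+1+j)) * f (i+1) = (- (\<Sum>j<U. Minv $$ (kk,j) * K (nl+j+1) (i+1))) * f (i+1)"
      by (simp add: sum_negf)
  qed
  also have "\<dots> = - (\<Sum>j=0..<U. Minv $$ (kk, j) * (\<Sum>i=0..<nl. K (nl+j+1) (i+1) * f (i+1)))"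
    unfolding lessThan_atLeast0 by (simp add: sum_negf sum_distrib_left sum_distrib_right mult_ac) (rule sum.swap)
  also have "\<dots> = harmonic_prediction n nl m src dst d f p"
    unfolding harmonic_prediction_def Minv_def[symmetric] kk_def[symmetric]
    using Minv(4) Lc kk by (simp add: scalar_prod_def lessThan_atLeast0 Lul_entry)
  finally show ?thesis .
qed


end

theorem proposition1:
  fixes n m nl :: nat and src dst :: "nat \<Rightarrow> nat" and d f :: "nat \<Rightarrow> real" and p :: nat
  assumes "1 \<le> nl" and "nl < n"
    and "\<forall>e\<in>{1..m}. src e \<in> {1..n} \<and> dst e \<in> {1..n} \<and> src e \<noteq> dst e"
    and "\<forall>e\<in>{1..m}. \<forall>e'\<in>{1..m}. e \<noteq> e' \<longrightarrow> {src e, dst e} \<noteq> {src e', dst e'}"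
    and "graph_connected n m src dst"
    and "\<forall>e\<in>{1..m}. d e > 0"
    and "p \<in> {nl+1..n}"
  shows "flow_prediction n nl m src dst d 0 f p = harmonic_prediction n nl m src dst d f p"
proof -
  interpret fsetup n m nl src dst d p
    using assms by unfold_locales auto
  show ?thesis by (rule main)
qed

end
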